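(* Assume (A1) and (A2), and let $\beta>\max\{\bar\beta_2,\bar\beta_3\}$. Let $x\in\mathcal{C}$ with $\|\nabla g(x)\|\le\varepsilon_1$. If $\nabla^2g(x)\succeq-\varepsilon_2\mathrm{Id}$, then $x$ is an $(\varepsilon_1,2\varepsilon_1,\varepsilon_2+C\varepsilon_1)$-approximate second-order critical point of $\min f(x)$ s.t. $h(x)=0$; in particular $\mathrm{Hess}_{\mathcal{M}_x}f(x)\succeq-(\varepsilon_2+C\varepsilon_1)\mathrm{Id}$, where $$C=\max_{y\in\mathcal{C}}\Big(2\big\|\mathrm{D}(z\mapsto\mathrm{D}h(z)^* )(y)\big\|_{\mathrm{op}}/\underline{\sigma}+\big\|\mathrm{D}(z\mapsto\mathrm{D}\lambda(z)^* )(y)\big\|_{\mathrm{op}}\Big).$$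
   Context: Let $\mathcal{E}$ be a Euclidean space with inner product $\langle\cdot,\cdot\rangle$ and norm $\|\cdot\|$ (2-norm on $\mathbb{R}^m$), and $f\colon\mathcal{E}\to\mathbb{R}$, $h=(h_1,\dots,h_m)\colon\mathcal{E}\to\mathbb{R}^m$ be $C^\infty$. $\mathrm{D}h(x)$ is the differential, $\mathrm{D}h(x)^*$ its adjoint, $\sigma_{\min}=\sigma_m$ the $m$-th singular value. $\mathcal{D}=\{x:\operatorname{rank}\mathrm{D}h(x)=m\}$; for $x\in\mathcal{D}$, $\lambda(x)=(\mathrm{D}h(x)^* )^\dagger[\nabla f(x)]$ (Moore–Penrose), smooth on $\mathcal{D}$. For $\beta\ge0$, $g(x)=f(x)-\langle h(x),\lambda(x)\rangle+\beta\|h(x)\|^2$. For $x\in\mathcal{D}$: $\mathcal{M}_x=\{y:h(y)=h(x)\}$, $\mathrm{Proj}_x$ the orthogonal projector onto $\ker\mathrm{D}h(x)$, $\mathrm{grad}_{\mathcal{M}_x}f(x)=\nabla f(x)-\mathrm{D}h(x)^*[\lambda(x)]$, $\mathrm{Hess}_{\mathcal{M}_x}f(x)=\mathrm{Proj}_x\circ(\nabla^2f(x)-\sum_i\lambda_i(x)\nabla^2h_i(x))\circ\mathrm{Proj}_x$ on $\ker\mathrm{D}h(x)$. (A1): there are $R,\underline{\sigma}>0$ with $\sigma_{\min}(\mathrm{D}h(x))\ge\underline{\sigma}$ for all $x\in\mathcal{C}=\{x:\|h(x)\|\le R\}$. (A2): $\mathcal{M}=\{h=0\}$ and $\mathcal{C}$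 are compact. For $x\in\mathcal{C}$: $C_\lambda(x)=\|\mathrm{D}\lambda(x)\|_{\mathrm{op}}$, $\beta_2(x)=C_\lambda(x)/\sigma_{\min}(\mathrm{D}h(x))$, $\beta_3(x)=1/\sigma_{\min}(\mathrm{D}h(x))$, $\bar\beta_i=\max_{x\in\mathcal{C}}\beta_i(x)$. $x\in\mathcal{D}$ is an $(\varepsilon_0,\varepsilon_1,\varepsilon_2)$-approximate second-order critical point if $\|h(x)\|\le\varepsilon_0$, $\|\mathrm{grad}_{\mathcal{M}_x}f(x)\|\le\varepsilon_1$ and $\mathrm{Hess}_{\mathcal{M}_x}f(x)\succeq-\varepsilon_2\mathrm{Id}$. *)

theory Defs
  imports "HOL-Analysis.Analysis"
begin

text \<open>D vs x is the
  iterated derivative evaluated in the directions of the list vs.\<close>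
definition smooth_real :: "('a::euclidean_space \<Rightarrow> real) \<Rightarrow> bool" where
  "smooth_real f \<longleftrightarrow> (\<exists>D :: 'a list \<Rightarrow> 'a \<Rightarrow> real. D [] = f \<and>
     (\<forall>vs x. ((D vs) has_derivative (\<lambda>v. D (v # vs) x)) (at x)))"

definition Dh :: "('a::euclidean_space \<Rightarrow> 'b::real_normed_vector) \<Rightarrow> 'a \<Rightarrow> 'a \<Rightarrow> 'b" where
  "Dh h x = frechet_derivative h (at x)"

definition grad :: "('a::euclidean_space \<Rightarrow> real) \<Rightarrow> 'a \<Rightarrow> 'a" where
  "grad f x = (\<Sum>b\<in>Basis. frechet_derivative f (at x) b *\<^sub>R b)"

definition hess :: "('a::euclidean_space \<Rightarrow> real) \<Rightarrow> 'a \<Rightarrow> 'a \<Rightarrow> 'a" where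
  "hess f x = frechet_derivative (grad f) (at x)"

definition mp_pinv :: "('a::euclidean_space \<Rightarrow> 'b::euclidean_space) \<Rightarrow> 'b \<Rightarrow> 'a" where
  "mp_pinv T = (SOME P. linear P \<and> T \<circ> P \<circ> T = T \<and> P \<circ> T \<circ> P = P \<and>
      adjoint (T \<circ> P) = T \<circ> P \<and> adjoint (P \<circ> T) = P \<circ> T)"

text \<open>Smallest (m-th) singular value of a linear map A : E -> R^m,
  via its variational characterisation sigma_m(A) = min over unit y of |A^* y|.\<close>
definition sigma_min :: "('a::euclidean_space \<Rightarrow> real^'m) \<Rightarrow> real" where
  "sigma_min A = Inf {norm (adjoint A y) | y. norm y = 1}"

definition fullrank_set :: "('a::euclidean_space \<Rightarrow> real^'m) \<Rightarrow> 'a set" where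
  "fullrank_set h = {x. dim (range (Dh h x)) = CARD('m)}"

definition lam :: "('a::euclidean_space \<Rightarrow> real) \<Rightarrow> ('a \<Rightarrow> real^'m) \<Rightarrow> 'a \<Rightarrow> real^'m" where
  "lam f h x = mp_pinv (adjoint (Dh h x)) (grad f x)"

definition gfun :: "('a::euclidean_space \<Rightarrow> real) \<Rightarrow> ('a \<Rightarrow> real^'m) \<Rightarrow> real \<Rightarrow> 'a \<Rightarrow> real" where
  "gfun f h \<beta> x = f x - h x \<bullet> lam f h x + \<beta> * (norm (h x))\<^sup>2"

definition Proj :: "('a::euclidean_space \<Rightarrow> real^'m) \<Rightarrow> 'a \<Rightarrow> 'a \<Rightarrow> 'a" where
  "Proj h x = closest_point {v. Dh h x v = 0}"

definition gradM :: "('a::euclidean_space \<Rightarrow> real) \<Rightarrow> ('a \<Rightarrow> real^'m) \<Rightarrow> 'a \<Rightarrow> 'a" where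
  "gradM f h x = grad f x - adjoint (Dh h x) (lam f h x)"

definition hessM :: "('a::euclidean_space \<Rightarrow> real) \<Rightarrow> ('a \<Rightarrow> real^'m) \<Rightarrow> 'a \<Rightarrow> 'a \<Rightarrow> 'a" where
  "hessM f h x = Proj h x \<circ>
     (\<lambda>v. hess f x v - (\<Sum>i\<in>UNIV. lam f h x $ i *\<^sub>R hess (\<lambda>y. h y $ i) x v)) \<circ> Proj h x"

definition psd_shift_on :: "'a::real_inner set \<Rightarrow> ('a \<Rightarrow> 'a) \<Rightarrow> real \<Rightarrow> bool" where
  "psd_shift_on S A \<epsilon> \<longleftrightarrow> (\<forall>v\<in>S. v \<bullet> A v + \<epsilon> * (v \<bullet> v) \<ge> 0)"

definition approx_socp ::
  "('a::euclidean_space \<Rightarrow> real) \<Rightarrow> ('a \<Rightarrow> real^'m) \<Rightarrow> real \<Rightarrow> real \<Rightarrow> real \<Rightarrow> 'a \<Rightarrow> bool" where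
  "approx_socp f h \<epsilon>0 \<epsilon>1 \<epsilon>2 x \<longleftrightarrow> x \<in> fullrank_set h \<and> norm (h x) \<le> \<epsilon>0 \<and>
     norm (gradM f h x) \<le> \<epsilon>1 \<and> psd_shift_on {v. Dh h x v = 0} (hessM f h x) \<epsilon>2"

definition C_lam :: "('a::euclidean_space \<Rightarrow> real) \<Rightarrow> ('a \<Rightarrow> real^'m) \<Rightarrow> 'a \<Rightarrow> real" where
  "C_lam f h x = onorm (frechet_derivative (lam f h) (at x))"

definition beta2 :: "('a::euclidean_space \<Rightarrow> real) \<Rightarrow> ('a \<Rightarrow> real^'m) \<Rightarrow> 'a \<Rightarrow> real" where
  "beta2 f h x = C_lam f h x / sigma_min (Dh h x)"

definition beta3 :: "('a::euclidean_space \<Rightarrow> real^'m) \<Rightarrow> 'a \<Rightarrow> real" where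
  "beta3 h x = 1 / sigma_min (Dh h x)"

definition Cconst :: "('a::euclidean_space \<Rightarrow> real) \<Rightarrow> ('a \<Rightarrow> real^'m) \<Rightarrow> real \<Rightarrow> real \<Rightarrow> real" where
  "Cconst f h R \<sigma> = (SUP y\<in>{x. norm (h x) \<le> R}.
      2 * onorm (frechet_derivative (\<lambda>z. Blinfun (adjoint (Dh h z))) (at y)) / \<sigma>
      + onorm (frechet_derivative (\<lambda>z. Blinfun (adjoint (frechet_derivative (lam f h) (at z)))) (at y)))"

end

theory Submission
  imports Defs
begin


coinductive smo :: "'a::real_normed_vector set \<Rightarrow> ('a \<Rightarrow> real) \<Rightarrow> bool" for U where
  smoI: "\<lbrakk>\<forall>x\<in>U. (f has_derivative (\<lambda>v. d v x)) (at x); \<forall>v. smo U (d v)\<rbrakk> \<Longrightarrow> smo U f"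

inductive alg :: "'a::real_normed_vector set \<Rightarrow> ('a \<Rightarrow> real) \<Rightarrow> bool" for U where
  alg_base: "smo U f \<Longrightarrow> alg U f"
| alg_const: "alg U (\<lambda>x. c)"
| alg_add: "alg U f \<Longrightarrow> alg U g \<Longrightarrow> alg U (\<lambda>x. f x + g x)"
| alg_mult: "alg U f \<Longrightarrow> alg U g \<Longrightarrow> alg U (\<lambda>x. f x * g x)"
| alg_inv: "alg U f \<Longrightarrow> \<forall>x\<in>U. f x \<noteq> 0 \<Longrightarrow> alg U (\<lambda>x. inverse (f x))"

lemma alg_deriv:
  assumes "alg U f"
  shows "\<exists>d. (\<forall>x\<in>U. (f has_derivative (\<lambda>v. d v x)) (at x)) \<and> (\<forall>v. alg U (d v))"
  using assms
proof induction
  case (alg_base f)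
  then show ?case by (cases rule: smo.cases) (auto intro: alg.alg_base)
next
  case (alg_const c)
  show ?case by (rule exI[of _ "\<lambda>v x. 0"]) (auto intro: alg.alg_const)
next
  case (alg_add f g)
  then obtain d1 d2 where d1: "\<forall>x\<in>U. (f has_derivative (\<lambda>v. d1 v x)) (at x)" "\<forall>v. alg U (d1 v)"
    and d2: "\<forall>x\<in>U. (g has_derivative (\<lambda>v. d2 v x)) (at x)" "\<forall>v. alg U (d2 v)" by blast
  show ?case
    by (rule exI[of _ "\<lambda>v x. d1 v x + d2 v x"]) (use d1 d2 in \<open>auto intro!: alg.alg_add derivative_eq_intros\<close>)
next
  case (alg_mult f g)
  then obtain d1 d2 where d1: "\<forall>x\<in>U. (f has_derivative (\<lambda>v. d1 v x)) (at x)" "\<forall>v. alg U (d1 v)"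
    and d2: "\<forall>x\<in>U. (g has_derivative (\<lambda>v. d2 v x)) (at x)" "\<forall>v. alg U (d2 v)" by blast
  show ?case
    apply (rule exI[of _ "\<lambda>v x. f x * d2 v x + d1 v x * g x"])
    using d1 d2 alg_mult.hyps by (auto intro!: alg.alg_add alg.alg_mult has_derivative_mult)
next
  case (alg_inv f)
  then obtain d1 where d1: "\<forall>x\<in>U. (f has_derivative (\<lambda>v. d1 v x)) (at x)" "\<forall>v. alg U (d1 v)" by blast
  have ai: "alg U (\<lambda>x. inverse (f x))" using alg_inv by (intro alg.alg_inv) auto
  show ?case
    apply (rule exI[of _ "\<lambda>v x. - (inverse (f x) * d1 v x * inverse (f x))"])
  proof (intro conjI ballI allI)
    fix x assume "x \<in> U"
    then show "((\<lambda>x. inverse (f x)) has_derivative (\<lambda>v. - (inverse (f x) * d1 v x * inverse (f x)))) (at x)"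
      using d1 alg_inv.hyps by (intro Deriv.has_derivative_inverse) auto
  next
    fix v
    have "alg U (\<lambda>x. (-1) * ((inverse (f x) * d1 v x) * inverse (f x)))"
      by (intro alg.alg_mult alg.alg_const ai d1(2)[rule_format])
    then show "alg U (\<lambda>x. - (inverse (f x) * d1 v x * inverse (f x)))" by simp
  qed
qed

lemma alg_smo: "alg U f \<Longrightarrow> smo U f"
proof (coinduction arbitrary: f rule: smo.coinduct)
  case (smo f)
  then show ?case using alg_deriv[OF smo] by blast
qed

abbreviation dd :: "('a::real_normed_vector \<Rightarrow> 'b::real_normed_vector) \<Rightarrow> 'a \<Rightarrow> 'a \<Rightarrow> 'b" where
  "dd f v x \<equiv> frechet_derivative f (at x) v"

lemma smo_hasderiv:
  assumes "smo U f" "x \<in> U"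
  shows "(f has_derivative (\<lambda>v. dd f v x)) (at x)"
  using assms(1)
proof (cases rule: smo.cases)
  case (smoI d)
  then have "(f has_derivative (\<lambda>v. d v x)) (at x)" using assms by auto
  moreover then have "(\<lambda>v. d v x) = frechet_derivative f (at x)" by (rule frechet_derivative_at)
  ultimately show ?thesis by simp
qed

lemma smo_differentiable: "smo U f \<Longrightarrow> x \<in> U \<Longrightarrow> f differentiable (at x)"
  using smo_hasderiv differentiable_def by blast

lemma smo_cont: "smo U f \<Longrightarrow> continuous_on U f"
  by (meson continuous_at_imp_continuous_on differentiable_imp_continuous_within smo_differentiable)

lemma smo_linear: "smo U f \<Longrightarrow> x \<in> U \<Longrightarrow> linear (\<lambda>v. dd f v x)"
  using smo_hasderiv has_derivative_linear by blast

lemma fd_cong: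
  assumes "open U" "x \<in> U" "\<And>z. z \<in> U \<Longrightarrow> F z = G z"
  shows "frechet_derivative F (at x) = frechet_derivative G (at x)"
proof -
  have "\<And>D. (F has_derivative D) (at x) \<longleftrightarrow> (G has_derivative D) (at x)"
    using has_derivative_transform_within_open[OF _ assms(1,2)] assms(3) by metis
  then show ?thesis unfolding frechet_derivative_def by simp
qed

lemma smo_cong:
  assumes "open U" "smo U f" "\<And>z. z \<in> U \<Longrightarrow> g z = f z"
  shows "smo U g"
  using assms(2,3)
proof (coinduction arbitrary: f g rule: smo.coinduct)
  case (smo f g)
  from smo(1) show ?case
  proof (cases rule: smo.cases)
    case (smoI d)
    show ?thesis
    proof (rule exI[of _ g], rule exI[of _ d], intro conjI refl ballI allI disjI2)
      fix x assume "x \<in> U"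
      have "(f has_derivative (\<lambda>v. d v x)) (at x)" using smoI(1) \<open>x \<in> U\<close> by blast
      then show "(g has_derivative (\<lambda>v. d v x)) (at x)"
        by (rule has_derivative_transform_within_open[OF _ assms(1) \<open>x \<in> U\<close>]) (use smo(2) in auto)
    next
      fix v show "smo U (d v)" using smoI(2) by blast
    qed
  qed
qed

lemma smo_dd:
  assumes "open U" "smo U f"
  shows "smo U (\<lambda>x. dd f v x)"
  using assms(2)
proof (cases rule: smo.cases)
  case (smoI d)
  have "dd f v z = d v z" if "z \<in> U" for z
  proof -
    have "(f has_derivative (\<lambda>v. d v z)) (at z)" using smoI(1) that by blast
    from frechet_derivative_at[OF this] show ?thesis by (metis (no_types))
  qed
  then show ?thesis using smo_cong[OF assms(1) smoI(2)[rule_format, of v]] by auto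
qed

lemma smo_UNIV: "smo UNIV f \<Longrightarrow> smo U f"
proof (coinduction arbitrary: f rule: smo.coinduct)
  case (smo f)
  then show ?case
  proof (cases rule: smo.cases)
    case (smoI d)
    show ?thesis by (rule exI[of _ f], rule exI[of _ d]) (use smoI in blast)
  qed
qed

lemma smooth_real_smo: "smooth_real f \<Longrightarrow> smo U f"
proof -
  assume "smooth_real f"
  then obtain D where D: "D [] = f" "\<forall>vs x. ((D vs) has_derivative (\<lambda>v. D (v # vs) x)) (at x)"
    unfolding smooth_real_def by blast
  have "smo UNIV (D vs)" for vs
  proof (coinduction arbitrary: vs rule: smo.coinduct)
    case (smo vs)
    show ?case
      apply (rule exI[of _ "D vs"], rule exI[of _ "\<lambda>v. D (v # vs)"])
      using D(2) by blast
  qed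
  then show ?thesis using D(1) smo_UNIV by metis
qed

lemma smo_const: "smo U (\<lambda>x. c)" by (intro alg_smo alg.alg_const)
lemma smo_add: "smo U f \<Longrightarrow> smo U g \<Longrightarrow> smo U (\<lambda>x. f x + g x)"
  by (rule alg_smo, rule alg.alg_add; rule alg.alg_base)
lemma smo_mult: "smo U f \<Longrightarrow> smo U g \<Longrightarrow> smo U (\<lambda>x. f x * g x)"
  by (rule alg_smo, rule alg.alg_mult; rule alg.alg_base)
lemma smo_inverse: "smo U f \<Longrightarrow> \<forall>x\<in>U. f x \<noteq> 0 \<Longrightarrow> smo U (\<lambda>x. inverse (f x))"
  by (rule alg_smo, rule alg.alg_inv, rule alg.alg_base)
lemma smo_minus: "smo U f \<Longrightarrow> smo U (\<lambda>x. - f x)"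
  using smo_mult[OF smo_const[of U "-1"], of f] by simp
lemma smo_diff: "smo U f \<Longrightarrow> smo U g \<Longrightarrow> smo U (\<lambda>x. f x - g x)"
  using smo_add[of U f "\<lambda>x. - g x"] smo_minus[of U g] by simp
lemma smo_divide: "smo U f \<Longrightarrow> smo U g \<Longrightarrow> \<forall>x\<in>U. g x \<noteq> 0 \<Longrightarrow> smo U (\<lambda>x. f x / g x)"
  using smo_mult[OF _ smo_inverse, of U f g] by (simp add: divide_inverse)
lemma smo_sum: "(\<And>i. i \<in> I \<Longrightarrow> smo U (F i)) \<Longrightarrow> smo U (\<lambda>x. \<Sum>i\<in>I. F i x)"
proof (induction I rule: infinite_finite_induct)
  case (insert i I) then show ?case using smo_add[of U "F i" "\<lambda>x. \<Sum>i\<in>I. F i x"] by simp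
qed (simp_all add: smo_const)
lemma smo_prod: "(\<And>i. i \<in> I \<Longrightarrow> smo U (F i)) \<Longrightarrow> smo U (\<lambda>x. \<Prod>i\<in>I. F i x)"
proof (induction I rule: infinite_finite_induct)
  case (insert i I) then show ?case using smo_mult[of U "F i" "\<lambda>x. \<Prod>i\<in>I. F i x"] by simp
qed (simp_all add: smo_const)

lemma smo_det:
  fixes N :: "'a::real_normed_vector \<Rightarrow> real^'n^'n"
  assumes "\<And>i j. smo U (\<lambda>x. N x $ i $ j)"
  shows "smo U (\<lambda>x. det (N x))"
  unfolding det_def
  by (rule smo_sum, rule smo_mult, rule smo_const, rule smo_prod, rule assms)

lemma lin_grad:
  fixes L :: "'a::euclidean_space \<Rightarrow> real"
  assumes "linear L"
  shows "L v = v \<bullet> (\<Sum>b\<in>Basis. L b *\<^sub>R b)"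
proof -
  have "L v = L (\<Sum>b\<in>Basis. (v \<bullet> b) *\<^sub>R b)" by (simp add: euclidean_representation)
  also have "\<dots> = (\<Sum>b\<in>Basis. (v \<bullet> b) * L b)"
    using assms by (simp add: linear_sum linear_scale)
  also have "\<dots> = v \<bullet> (\<Sum>b\<in>Basis. L b *\<^sub>R b)"
    by (simp add: inner_sum_right mult.commute)
  finally show ?thesis .
qed

lemma dd_grad:
  fixes \<phi> :: "'a::euclidean_space \<Rightarrow> real"
  assumes "smo U \<phi>" "z \<in> U"
  shows "dd \<phi> v z = v \<bullet> grad \<phi> z"
proof -
  have "dd \<phi> v z = v \<bullet> (\<Sum>b\<in>Basis. dd \<phi> b z *\<^sub>R b)"
    by (rule lin_grad[OF smo_linear[OF assms], of v])
  then show ?thesis unfolding grad_def .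
qed

lemma dd_expand:
  fixes \<phi> :: "'a::euclidean_space \<Rightarrow> real"
  assumes "smo U \<phi>" "z \<in> U"
  shows "dd \<phi> v z = (\<Sum>b\<in>Basis. (v \<bullet> b) * dd \<phi> b z)"
proof -
  have "dd \<phi> v z = v \<bullet> grad \<phi> z" by (rule dd_grad[OF assms])
  also have "\<dots> = (\<Sum>b\<in>Basis. (v \<bullet> b) * dd \<phi> b z)"
    unfolding grad_def by (simp add: inner_sum_right mult.commute)
  finally show ?thesis .
qed

lemma hasderiv_sum_basis:
  fixes \<psi> :: "'a::euclidean_space \<Rightarrow> 'a \<Rightarrow> real"
  assumes "open U" "\<And>b. b \<in> Basis \<Longrightarrow> smo U (\<psi> b)" "x \<in> U"
  shows "((\<lambda>z. \<Sum>b\<in>Basis. c b * \<psi> b z) has_derivative (\<lambda>w. \<Sum>b\<in>Basis. c b * dd (\<psi> b) w x)) (at x)"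
  by (intro has_derivative_sum has_derivative_mult_right smo_hasderiv[OF assms(2) assms(3)])

lemma dd2_expand:
  fixes \<phi> :: "'a::euclidean_space \<Rightarrow> real"
  assumes "open U" "smo U \<phi>" "x \<in> U"
  shows "dd (\<lambda>z. dd \<phi> v z) w x = (\<Sum>b\<in>Basis. (v \<bullet> b) * dd (\<lambda>z. dd \<phi> b z) w x)"
proof -
  have "frechet_derivative (\<lambda>z. dd \<phi> v z) (at x) = frechet_derivative (\<lambda>z. \<Sum>b\<in>Basis. (v \<bullet> b) * dd \<phi> b z) (at x)"
    by (rule fd_cong[OF assms(1,3)]) (rule dd_expand[OF assms(2)])
  also have "\<dots> = (\<lambda>w. \<Sum>b\<in>Basis. (v \<bullet> b) * dd (\<lambda>z. dd \<phi> b z) w x)"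
    by (rule frechet_derivative_at[symmetric], rule hasderiv_sum_basis[OF assms(1) _ assms(3)])
       (rule smo_dd[OF assms(1,2)])
  finally show ?thesis by simp
qed

lemma grad_hasderiv:
  fixes \<phi> :: "'a::euclidean_space \<Rightarrow> real"
  assumes "open U" "smo U \<phi>" "x \<in> U"
  shows "(grad \<phi> has_derivative (\<lambda>w. \<Sum>b\<in>Basis. dd (\<lambda>z. dd \<phi> b z) w x *\<^sub>R b)) (at x)"
proof -
  have "grad \<phi> = (\<lambda>z. \<Sum>b\<in>Basis. dd \<phi> b z *\<^sub>R b)" unfolding grad_def by simp
  moreover have "((\<lambda>z. \<Sum>b\<in>Basis. dd \<phi> b z *\<^sub>R b) has_derivative (\<lambda>w. \<Sum>b\<in>Basis. dd (\<lambda>z. dd \<phi> b z) w x *\<^sub>R b)) (at x)"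
    by (intro has_derivative_sum has_derivative_scaleR_left smo_hasderiv[OF smo_dd[OF assms(1,2)] assms(3)])
  ultimately show ?thesis by simp
qed

lemma hess_Q:
  fixes \<phi> :: "'a::euclidean_space \<Rightarrow> real"
  assumes "open U" "smo U \<phi>" "x \<in> U"
  shows "v \<bullet> hess \<phi> x v = dd (\<lambda>z. dd \<phi> v z) v x"
proof -
  have "hess \<phi> x = (\<lambda>w. \<Sum>b\<in>Basis. dd (\<lambda>z. dd \<phi> b z) w x *\<^sub>R b)"
    unfolding hess_def by (rule frechet_derivative_at[symmetric], rule grad_hasderiv[OF assms])
  then have "v \<bullet> hess \<phi> x v = (\<Sum>b\<in>Basis. (v \<bullet> b) * dd (\<lambda>z. dd \<phi> b z) v x)"
    by (simp add: inner_sum_right mult.commute)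
  also have "\<dots> = dd (\<lambda>z. dd \<phi> v z) v x"
    using dd2_expand[OF assms, of v v] by simp
  finally show ?thesis .
qed

definition Tm :: "('m::finite \<Rightarrow> 'a::euclidean_space \<Rightarrow> real) \<Rightarrow> 'a \<Rightarrow> 'a \<Rightarrow> real^'m" where
  "Tm \<phi> z = (\<lambda>v. \<chi> i. dd (\<phi> i) v z)"

definition Eib :: "'m::finite \<Rightarrow> 'a::euclidean_space \<Rightarrow> ((real^'m) \<Rightarrow>\<^sub>L 'a)" where
  "Eib i b = Blinfun (\<lambda>y. (y$i) *\<^sub>R b)"

lemma Eib_apply:
  fixes y :: "real^'m::finite" and i :: 'm and b :: "'a::euclidean_space"
  shows "blinfun_apply (Eib i b) y = (y$i) *\<^sub>R b"
proof -
  have "bounded_linear (\<lambda>y::real^'m. (y$i) *\<^sub>R b)"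
    by (rule bounded_linear_compose[OF bounded_linear_scaleR_left bounded_linear_vec_nth])
  then show ?thesis unfolding Eib_def by (simp add: bounded_linear_Blinfun_apply)
qed

lemma Tm_grad:
  fixes \<phi> :: "'m::finite \<Rightarrow> 'a::euclidean_space \<Rightarrow> real"
  assumes "\<forall>i. smo U (\<phi> i)" "z \<in> U"
  shows "Tm \<phi> z = (\<lambda>v. \<chi> i. v \<bullet> grad (\<phi> i) z)"
  unfolding Tm_def by (intro ext) (simp add: vec_eq_iff dd_grad[OF assms(1)[rule_format] assms(2)])

lemma Tm_linear:
  fixes \<phi> :: "'m::finite \<Rightarrow> 'a::euclidean_space \<Rightarrow> real"
  assumes "\<forall>i. smo U (\<phi> i)" "z \<in> U"
  shows "linear (Tm \<phi> z)"
  unfolding Tm_grad[OF assms] by (simp add: linear_iff vec_eq_iff inner_add_left)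

lemma Tm_adjoint:
  fixes \<phi> :: "'m::finite \<Rightarrow> 'a::euclidean_space \<Rightarrow> real"
  assumes "\<forall>i. smo U (\<phi> i)" "z \<in> U"
  shows "adjoint (Tm \<phi> z) = (\<lambda>y. \<Sum>i\<in>UNIV. (y$i) *\<^sub>R grad (\<phi> i) z)"
  by (rule adjoint_unique) (simp add: Tm_grad[OF assms] inner_vec_def inner_sum_right mult.commute)

lemma Tm_onorm:
  fixes \<phi> :: "'m::finite \<Rightarrow> 'a::euclidean_space \<Rightarrow> real"
  assumes "\<forall>i. smo U (\<phi> i)" "z \<in> U"
  shows "onorm (Tm \<phi> z) \<le> (\<Sum>i\<in>UNIV. norm (grad (\<phi> i) z))"
proof (rule onorm_bound)
  show "0 \<le> (\<Sum>i\<in>UNIV. norm (grad (\<phi> i) z))" by (simp add: sum_nonneg)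
  fix v
  have "norm (Tm \<phi> z v) \<le> (\<Sum>i\<in>UNIV. \<bar>Tm \<phi> z v $ i\<bar>)" by (rule norm_le_l1_cart)
  also have "\<dots> \<le> (\<Sum>i\<in>UNIV. norm (grad (\<phi> i) z) * norm v)"
    unfolding Tm_grad[OF assms]
    by (rule sum_mono) (simp add: Cauchy_Schwarz_ineq2 mult.commute)
  finally show "norm (Tm \<phi> z v) \<le> (\<Sum>i\<in>UNIV. norm (grad (\<phi> i) z)) * norm v"
    by (simp add: sum_distrib_right)
qed

lemma Fb_eq:
  fixes \<phi> :: "'m::finite \<Rightarrow> 'a::euclidean_space \<Rightarrow> real"
  assumes "\<forall>i. smo U (\<phi> i)" "z \<in> U"
  shows "Blinfun (adjoint (Tm \<phi> z)) = (\<Sum>i\<in>UNIV. \<Sum>b\<in>Basis. dd (\<phi> i) b z *\<^sub>R Eib i b)"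
proof (rule blinfun_eqI)
  fix y :: "real^'m"
  have bl: "bounded_linear (\<lambda>y::real^'m. \<Sum>i\<in>UNIV. (y$i) *\<^sub>R grad (\<phi> i) z)"
    by (intro bounded_linear_sum bounded_linear_compose[OF bounded_linear_scaleR_left bounded_linear_vec_nth, unfolded o_def])
  show "blinfun_apply (Blinfun (adjoint (Tm \<phi> z))) y = blinfun_apply (\<Sum>i\<in>UNIV. \<Sum>b\<in>Basis. dd (\<phi> i) b z *\<^sub>R Eib i b) y"
    unfolding Tm_adjoint[OF assms] bounded_linear_Blinfun_apply[OF bl]
    by (simp add: blinfun.sum_left blinfun.scaleR_left Eib_apply grad_def scaleR_sum_right mult.commute)
qed

lemma Fsum_hasderiv:
  fixes \<phi> :: "'m::finite \<Rightarrow> 'a::euclidean_space \<Rightarrow> real"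
  assumes "open U" "\<forall>i. smo U (\<phi> i)" "x \<in> U"
  shows "((\<lambda>z. \<Sum>i\<in>UNIV. \<Sum>b\<in>Basis. dd (\<phi> i) b z *\<^sub>R Eib i b) has_derivative
          (\<lambda>w. \<Sum>i\<in>UNIV. \<Sum>b\<in>Basis. dd (\<lambda>z. dd (\<phi> i) b z) w x *\<^sub>R (Eib i b :: (real^'m) \<Rightarrow>\<^sub>L 'a::euclidean_space))) (at x)"
  by (intro has_derivative_sum has_derivative_scaleR_left smo_hasderiv[OF smo_dd[OF assms(1)] assms(3)])
     (use assms(2) in blast)

lemma fd_Fb:
  fixes \<phi> :: "'m::finite \<Rightarrow> 'a::euclidean_space \<Rightarrow> real"
  assumes "open U" "\<forall>i. smo U (\<phi> i)" "x \<in> U"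
  shows "frechet_derivative (\<lambda>z. Blinfun (adjoint (Tm \<phi> z))) (at x) =
          (\<lambda>w. \<Sum>i\<in>UNIV. \<Sum>b\<in>Basis. dd (\<lambda>z. dd (\<phi> i) b z) w x *\<^sub>R (Eib i b :: (real^'m) \<Rightarrow>\<^sub>L 'a::euclidean_space))"
proof -
  have "frechet_derivative (\<lambda>z. Blinfun (adjoint (Tm \<phi> z))) (at x) =
        frechet_derivative (\<lambda>z. \<Sum>i\<in>UNIV. \<Sum>b\<in>Basis. dd (\<phi> i) b z *\<^sub>R Eib i b) (at x)"
    by (rule fd_cong[OF assms(1,3)]) (rule Fb_eq[OF assms(2)])
  also have "\<dots> = (\<lambda>w. \<Sum>i\<in>UNIV. \<Sum>b\<in>Basis. dd (\<lambda>z. dd (\<phi> i) b z) w x *\<^sub>R Eib i b)"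
    by (rule frechet_derivative_at[symmetric], rule Fsum_hasderiv[OF assms])
  finally show ?thesis .
qed

lemma Fb_key:
  fixes \<phi> :: "'m::finite \<Rightarrow> 'a::euclidean_space \<Rightarrow> real"
  assumes "open U" "\<forall>i. smo U (\<phi> i)" "x \<in> U"
  shows "(\<Sum>i\<in>UNIV. y$i * dd (\<lambda>z. dd (\<phi> i) v z) v x) =
         v \<bullet> blinfun_apply (frechet_derivative (\<lambda>z. Blinfun (adjoint (Tm \<phi> z))) (at x) v) y"
proof -
  have e: "dd (\<lambda>z. dd (\<phi> i) v z) v x = (\<Sum>b\<in>Basis. (v \<bullet> b) * dd (\<lambda>z. dd (\<phi> i) b z) v x)" for i
    using dd2_expand[OF assms(1) assms(2)[rule_format] assms(3)] by blast
  show ?thesis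
    unfolding fd_Fb[OF assms]
    by (simp add: e blinfun.sum_left blinfun.scaleR_left Eib_apply inner_sum_right sum_distrib_left
        algebra_simps)
qed

lemma Fb_DF_bl:
  fixes \<phi> :: "'m::finite \<Rightarrow> 'a::euclidean_space \<Rightarrow> real"
  assumes "open U" "\<forall>i. smo U (\<phi> i)" "x \<in> U"
  shows "bounded_linear (frechet_derivative (\<lambda>z. Blinfun (adjoint (Tm \<phi> z))) (at x))"
  unfolding fd_Fb[OF assms] by (rule has_derivative_bounded_linear[OF Fsum_hasderiv[OF assms]])

lemma Fb_bound:
  fixes \<phi> :: "'m::finite \<Rightarrow> 'a::euclidean_space \<Rightarrow> real"
  assumes "open U" "\<forall>i. smo U (\<phi> i)" "x \<in> U"
  shows "\<bar>\<Sum>i\<in>UNIV. y$i * dd (\<lambda>z. dd (\<phi> i) v z) v x\<bar> \<le>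
         onorm (frechet_derivative (\<lambda>z. Blinfun (adjoint (Tm \<phi> z))) (at x)) * norm v * norm v * norm y"
proof -
  let ?F = "frechet_derivative (\<lambda>z. Blinfun (adjoint (Tm \<phi> z))) (at x)"
  have "\<bar>v \<bullet> blinfun_apply (?F v) y\<bar> \<le> norm v * norm (blinfun_apply (?F v) y)"
    by (rule Cauchy_Schwarz_ineq2)
  also have "\<dots> \<le> norm v * (norm (?F v) * norm y)"
    by (intro mult_left_mono norm_blinfun) auto
  also have "\<dots> \<le> norm v * ((onorm ?F * norm v) * norm y)"
    by (intro mult_left_mono mult_right_mono onorm[OF Fb_DF_bl[OF assms]]) auto
  finally show ?thesis unfolding Fb_key[OF assms] by (simp add: algebra_simps)
qed

lemma grad_cont:
  fixes \<psi> :: "'a::euclidean_space \<Rightarrow> real"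
  assumes "open U" "smo U \<psi>"
  shows "continuous_on U (grad \<psi>)"
proof -
  have "grad \<psi> = (\<lambda>z. \<Sum>b\<in>Basis. dd \<psi> b z *\<^sub>R b)" unfolding grad_def by simp
  moreover have "continuous_on U (\<lambda>z. \<Sum>b\<in>Basis. dd \<psi> b z *\<^sub>R b)"
    by (intro continuous_on_sum continuous_on_scaleR continuous_on_const smo_cont[OF smo_dd[OF assms]])
  ultimately show ?thesis by simp
qed

definition KF :: "('m::finite \<Rightarrow> 'a::euclidean_space \<Rightarrow> real) \<Rightarrow> 'a \<Rightarrow> real" where
  "KF \<phi> x = (\<Sum>i\<in>UNIV. \<Sum>b\<in>Basis. norm (grad (\<lambda>z. dd (\<phi> i) b z) x) * norm (Eib i b :: (real^'m) \<Rightarrow>\<^sub>L 'a))"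

lemma KF_cont:
  fixes \<phi> :: "'m::finite \<Rightarrow> 'a::euclidean_space \<Rightarrow> real"
  assumes "open U" "\<forall>i. smo U (\<phi> i)"
  shows "continuous_on U (KF \<phi>)"
  unfolding KF_def
  by (intro continuous_on_sum continuous_on_mult continuous_on_const continuous_on_norm
      grad_cont[OF assms(1) smo_dd[OF assms(1) assms(2)[rule_format]]])

lemma Fb_onorm:
  fixes \<phi> :: "'m::finite \<Rightarrow> 'a::euclidean_space \<Rightarrow> real"
  assumes "open U" "\<forall>i. smo U (\<phi> i)" "x \<in> U"
  shows "onorm (frechet_derivative (\<lambda>z. Blinfun (adjoint (Tm \<phi> z))) (at x)) \<le> KF \<phi> x"
  unfolding fd_Fb[OF assms]
proof (rule onorm_bound)
  show "0 \<le> KF \<phi> x" unfolding KF_def by (intro sum_nonneg mult_nonneg_nonneg) auto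
  fix w :: 'a
  have "norm (\<Sum>i\<in>UNIV. \<Sum>b\<in>Basis. dd (\<lambda>z. dd (\<phi> i) b z) w x *\<^sub>R (Eib i b :: (real^'m) \<Rightarrow>\<^sub>L 'a))
      \<le> (\<Sum>i\<in>UNIV. norm (\<Sum>b\<in>Basis. dd (\<lambda>z. dd (\<phi> i) b z) w x *\<^sub>R (Eib i b :: (real^'m) \<Rightarrow>\<^sub>L 'a)))"
    by (rule norm_sum)
  also have "\<dots> \<le> (\<Sum>i\<in>UNIV. \<Sum>b\<in>Basis. norm (dd (\<lambda>z. dd (\<phi> i) b z) w x *\<^sub>R (Eib i b :: (real^'m) \<Rightarrow>\<^sub>L 'a)))"
    by (intro sum_mono norm_sum)
  also have "\<dots> \<le> (\<Sum>i\<in>UNIV. \<Sum>b\<in>Basis. norm (grad (\<lambda>z. dd (\<phi> i) b z) x) * norm (Eib i b :: (real^'m) \<Rightarrow>\<^sub>L 'a) * norm w)"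
  proof (intro sum_mono)
    fix i b
    have "\<bar>dd (\<lambda>z. dd (\<phi> i) b z) w x\<bar> = \<bar>w \<bullet> grad (\<lambda>z. dd (\<phi> i) b z) x\<bar>"
      using dd_grad[OF smo_dd[OF assms(1) assms(2)[rule_format]] assms(3)] by metis
    also have "\<dots> \<le> norm w * norm (grad (\<lambda>z. dd (\<phi> i) b z) x)" by (rule Cauchy_Schwarz_ineq2)
    finally have c: "\<bar>dd (\<lambda>z. dd (\<phi> i) b z) w x\<bar> \<le> norm w * norm (grad (\<lambda>z. dd (\<phi> i) b z) x)" .
    show "norm (dd (\<lambda>z. dd (\<phi> i) b z) w x *\<^sub>R (Eib i b :: (real^'m) \<Rightarrow>\<^sub>L 'a))
        \<le> norm (grad (\<lambda>z. dd (\<phi> i) b z) x) * norm (Eib i b :: (real^'m) \<Rightarrow>\<^sub>L 'a) * norm w"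
      using mult_left_mono[OF c norm_ge_zero[of "Eib i b :: (real^'m) \<Rightarrow>\<^sub>L 'a"]]
      by (simp add: algebra_simps)
  qed
  finally show "norm (\<Sum>i\<in>UNIV. \<Sum>b\<in>Basis. dd (\<lambda>z. dd (\<phi> i) b z) w x *\<^sub>R (Eib i b :: (real^'m) \<Rightarrow>\<^sub>L 'a))
      \<le> KF \<phi> x * norm w"
    unfolding KF_def by (simp add: sum_distrib_right)
qed

lemma hvec_deriv:
  fixes F :: "'a::euclidean_space \<Rightarrow> real^'m::finite"
  assumes "\<forall>i. smo U (\<lambda>y. F y $ i)" "z \<in> U"
  shows "(F has_derivative Tm (\<lambda>i y. F y $ i) z) (at z)"
proof -
  have "((\<lambda>y. F y \<bullet> b) has_derivative (\<lambda>v. Tm (\<lambda>i y. F y $ i) z v \<bullet> b)) (at z)" if "b \<in> Basis" for b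
  proof -
    from that obtain i where b: "b = axis i 1" unfolding Basis_vec_def by auto
    show ?thesis unfolding b inner_axis Tm_def
      using smo_hasderiv[OF assms(1)[rule_format, of i] assms(2)] by simp
  qed
  then show ?thesis
    using has_derivative_componentwise_within[of F "Tm (\<lambda>i y. F y $ i) z" z UNIV] by blast
qed

lemma grad_inner:
  fixes \<phi> \<psi> :: "'a::euclidean_space \<Rightarrow> real"
  shows "grad \<phi> z \<bullet> grad \<psi> z = (\<Sum>b\<in>Basis. dd \<phi> b z * dd \<psi> b z)"
  unfolding grad_def by (simp add: inner_sum_left inner_sum_right inner_Basis if_distrib sum.delta mult.commute cong: if_cong)

lemma pinv_lemma:
  fixes J :: "'a::euclidean_space \<Rightarrow> real^'m::finite" and Mx :: "real^'m^'m"
  assumes lin: "linear J" and MJ: "\<And>u. Mx *v u = J (adjoint J u)" and d: "det Mx \<noteq> 0"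
  shows "Mx *v mp_pinv (adjoint J) w = J w"
proof -
  let ?T = "adjoint J"
  have linT: "linear ?T" by (rule adjoint_linear[OF lin])
  have inv: "invertible Mx" using d invertible_det_nz by blast
  then obtain Mi where Mi: "Mx ** Mi = mat 1" "Mi ** Mx = mat 1" unfolding invertible_def by blast
  have Tinj: "?T y = 0 \<Longrightarrow> y = 0" for y
  proof -
    assume "?T y = 0"
    then have "Mx *v y = 0" using MJ linear_0[OF lin] by simp
    then have "Mi *v (Mx *v y) = 0" by simp
    then show "y = 0" by (simp add: matrix_vector_mul_assoc Mi)
  qed
  define P where "P = (\<lambda>w. Mi *v J w)"
  have linP: "linear P" unfolding P_def
    using linear_compose[OF lin matrix_vector_mul_linear[of Mi]] by (simp add: o_def)
  have PT: "P (?T y) = y" for y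
    unfolding P_def MJ[symmetric] by (simp add: matrix_vector_mul_assoc Mi)
  have Mi_sym: "(Mi *v a) \<bullet> b = a \<bullet> (Mi *v b)" for a b
  proof -
    have "(Mi *v a) \<bullet> b = (Mi *v a) \<bullet> (Mx *v (Mi *v b))" by (simp add: matrix_vector_mul_assoc Mi)
    also have "\<dots> = ?T (Mi *v a) \<bullet> ?T (Mi *v b)"
      unfolding MJ by (simp add: adjoint_clauses(2)[OF lin])
    also have "\<dots> = (Mx *v (Mi *v a)) \<bullet> (Mi *v b)"
      unfolding MJ by (simp add: adjoint_clauses[OF lin])
    also have "\<dots> = a \<bullet> (Mi *v b)" by (simp add: matrix_vector_mul_assoc Mi)
    finally show ?thesis .
  qed
  have ex: "\<exists>P. linear P \<and> ?T \<circ> P \<circ> ?T = ?T \<and> P \<circ> ?T \<circ> P = P \<and>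
      adjoint (?T \<circ> P) = ?T \<circ> P \<and> adjoint (P \<circ> ?T) = P \<circ> ?T"
  proof (intro exI[of _ P] conjI)
    show "linear P" by (rule linP)
    show "?T \<circ> P \<circ> ?T = ?T" by (simp add: o_def PT)
    show "P \<circ> ?T \<circ> P = P" by (simp add: o_def PT)
    show "adjoint (?T \<circ> P) = ?T \<circ> P"
      apply (rule adjoint_unique)
      apply (simp add: P_def adjoint_clauses[OF lin])
      by (metis Mi_sym inner_commute)
    show "adjoint (P \<circ> ?T) = P \<circ> ?T"
      by (rule adjoint_unique) (simp add: PT)
  qed
  define Q where "Q = mp_pinv ?T"
  have Q: "linear Q \<and> ?T \<circ> Q \<circ> ?T = ?T \<and> Q \<circ> ?T \<circ> Q = Q \<and>
      adjoint (?T \<circ> Q) = ?T \<circ> Q \<and> adjoint (Q \<circ> ?T) = Q \<circ> ?T"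
    unfolding Q_def mp_pinv_def by (rule someI_ex[OF ex])
  have linQ: "linear Q" using Q by blast
  have QT: "Q (?T y) = y" for y
  proof -
    have "?T (Q (?T y)) = ?T y" using Q by (metis comp_apply)
    then have "?T (Q (?T y) - y) = 0" using linear_diff[OF linT] by simp
    from Tinj[OF this] show ?thesis by simp
  qed
  have linTQ: "linear (?T \<circ> Q)" by (rule linear_compose[OF linQ linT])
  have "(J (?T (Q w)) - J w) \<bullet> y = 0" for y
  proof -
    have "?T (Q w) \<bullet> ?T y = w \<bullet> adjoint (?T \<circ> Q) (?T y)"
      using adjoint_clauses(1)[OF linTQ, of w "?T y"] by (simp add: inner_commute)
    also have "\<dots> = w \<bullet> ?T y" using Q QT by (simp add: o_def)
    finally have "?T (Q w) \<bullet> ?T y = w \<bullet> ?T y" .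
    then show ?thesis by (simp add: adjoint_clauses[OF lin] inner_diff_left)
  qed
  then have "J (?T (Q w)) - J w = 0" by (metis inner_eq_zero_iff)
  then show ?thesis unfolding MJ Q_def by simp
qed

lemma sig_bound:
  fixes J :: "'a::euclidean_space \<Rightarrow> real^'m::finite"
  assumes lin: "linear J"
  shows "sigma_min J * norm y \<le> norm (adjoint J y)"
proof (cases "y = 0")
  case True
  then show ?thesis using linear_0[OF adjoint_linear[OF lin]] by simp
next
  case False
  let ?u = "y /\<^sub>R norm y"
  have "norm ?u = 1" using False by simp
  then have "sigma_min J \<le> norm (adjoint J ?u)"
    unfolding sigma_min_def by (intro cInf_lower) (auto intro: bdd_belowI[of _ 0])
  also have "adjoint J ?u = adjoint J y /\<^sub>R norm y"
    using linear_scale[OF adjoint_linear[OF lin]] by simp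
  finally have "sigma_min J \<le> norm (adjoint J y /\<^sub>R norm y)" .
  then have "sigma_min J \<le> norm (adjoint J y) / norm y" by (simp add: divide_inverse mult.commute)
  then show ?thesis using False by (simp add: le_divide_eq)
qed

lemma det_nz_ker:
  fixes Mx :: "real^'m::finite^'m"
  assumes "\<And>y. Mx *v y = 0 \<Longrightarrow> y = 0"
  shows "det Mx \<noteq> 0"
proof -
  obtain B where B: "B ** Mx = mat 1" using matrix_left_invertible_ker[of Mx] assms by blast
  then have "Mx ** B = mat 1" using matrix_left_right_inverse by blast
  with B have "invertible Mx" unfolding invertible_def by blast
  then show ?thesis using invertible_det_nz by blast
qed

lemma proj_inner:
  fixes J :: "'a::euclidean_space \<Rightarrow> 'b::euclidean_space"
  assumes lin: "linear J" and v: "J v = 0"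
  shows "v \<bullet> closest_point {w. J w = 0} u = v \<bullet> u"
proof -
  let ?S = "{w. J w = 0}"
  have sub: "subspace ?S" using lin by (auto simp: subspace_def linear_add linear_scale linear_0)
  have cv: "convex ?S" by (rule subspace_imp_convex[OF sub])
  have cl: "closed ?S" by (rule closed_subspace[OF sub])
  let ?p = "closest_point ?S u"
  have pS: "?p \<in> ?S" by (rule closest_point_in_set[OF cl]) (use linear_0[OF lin] in auto)
  have "?p + v \<in> ?S" "?p - v \<in> ?S" using pS v lin by (auto simp: linear_add linear_diff)
  from closest_point_dot[OF cv cl this(1), of u] closest_point_dot[OF cv cl this(2), of u]
  have "(u - ?p) \<bullet> v \<le> 0" "(u - ?p) \<bullet> (- v) \<le> 0" by auto
  then have "(u - ?p) \<bullet> v = 0" by simp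
  then have "u \<bullet> v = ?p \<bullet> v" by (simp add: inner_diff_left)
  then show ?thesis by (simp add: inner_commute)
qed

lemma bounded_on_compact:
  fixes k :: "'a::metric_space \<Rightarrow> real"
  assumes "compact C" "C \<subseteq> U" "continuous_on U k"
  shows "\<exists>B. \<forall>y\<in>C. k y \<le> B"
proof -
  have "compact (k ` C)"
    by (rule compact_continuous_image[OF continuous_on_subset[OF assms(3,2)] assms(1)])
  then obtain B where "\<forall>t\<in>k ` C. norm t \<le> B" using compact_imp_bounded bounded_iff by metis
  then show ?thesis by (metis abs_le_D1 image_eqI real_norm_def)
qed

lemma first_order:
  fixes J L :: "'a::euclidean_space \<Rightarrow> real^'m::finite" and gM gw :: 'a and hv :: "real^'m"
  assumes lin: "linear J" and bl: "bounded_linear L" and s: "s > 0"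
    and sig: "\<And>y. s * norm y \<le> norm (adjoint J y)"
    and JgM: "J gM = 0"
    and gw: "\<And>u. u \<bullet> gw = u \<bullet> gM - hv \<bullet> L u + 2 * \<beta> * (J u \<bullet> hv)"
    and ngw: "norm gw \<le> e1"
    and b2: "\<beta> > onorm L / s" and b3: "\<beta> > 1 / s"
  shows "norm hv \<le> e1" "\<beta> * s * norm hv \<le> e1" "norm gM \<le> 2 * e1"
proof -
  let ?C = "onorm L"
  let ?a = "adjoint J hv"
  have C0: "0 \<le> ?C" by (rule onorm_pos_le[OF bl])
  have bs: "\<beta> * s > ?C" using b2 s by (simp add: field_simps)
  have bs1: "\<beta> * s > 1" using b3 s by (simp add: field_simps)
  have Lb: "\<bar>hv \<bullet> L u\<bar> \<le> norm hv * (?C * norm u)" for u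
  proof -
    have "\<bar>hv \<bullet> L u\<bar> \<le> norm hv * norm (L u)" by (rule Cauchy_Schwarz_ineq2)
    also have "\<dots> \<le> norm hv * (?C * norm u)" by (intro mult_left_mono onorm[OF bl]) auto
    finally show ?thesis .
  qed
  have Ju: "J u \<bullet> hv = u \<bullet> ?a" for u by (simp add: adjoint_clauses[OF lin])
  have agM: "?a \<bullet> gM = 0" using adjoint_clauses(2)[OF lin, of hv gM] JgM by simp
  have key: "\<beta> * s * norm hv \<le> e1 \<and> ?C * norm hv \<le> e1"
  proof (cases "?a = 0")
    case True
    then have "s * norm hv \<le> 0" using sig[of hv] by simp
    then have "norm hv = 0" using s by (simp add: mult_le_0_iff)
    moreover have "0 \<le> e1" using ngw norm_ge_zero order_trans by blast
    ultimately show ?thesis by simp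
  next
    case False
    then have na: "norm ?a > 0" by simp
    have e: "?a \<bullet> gw = - (hv \<bullet> L ?a) + 2 * \<beta> * (?a \<bullet> ?a)"
      using gw[of ?a] agM Ju[of ?a] by simp
    have "?a \<bullet> gw \<le> norm ?a * e1"
      using Cauchy_Schwarz_ineq2[of ?a gw] ngw abs_le_D1
      by (meson mult_left_mono norm_ge_zero order_trans)
    moreover have "- (hv \<bullet> L ?a) \<ge> - (norm hv * (?C * norm ?a))" using Lb[of ?a] by linarith
    ultimately have "2 * \<beta> * (norm ?a * norm ?a) \<le> norm ?a * e1 + norm hv * (?C * norm ?a)"
      using e by (simp add: power2_norm_eq_inner[symmetric] power2_eq_square)
    then have "norm ?a * (2 * \<beta> * norm ?a) \<le> norm ?a * (e1 + ?C * norm hv)"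
      by (simp add: algebra_simps)
    then have i1: "2 * \<beta> * norm ?a \<le> e1 + ?C * norm hv" using na by simp
    have b0: "\<beta> > 0" using b3 s by (meson divide_pos_pos less_trans zero_less_one)
    have "2 * \<beta> * (s * norm hv) \<le> 2 * \<beta> * norm ?a"
      using sig[of hv] b0 by simp
    then have i2: "2 * (\<beta> * s) * norm hv \<le> e1 + ?C * norm hv" using i1 by (simp add: algebra_simps)
    have "?C * norm hv \<le> \<beta> * s * norm hv" using bs by (intro mult_right_mono) auto
    with i2 show ?thesis by (simp add: algebra_simps)
  qed
  then show bsh: "\<beta> * s * norm hv \<le> e1" by simp
  have "norm hv \<le> \<beta> * s * norm hv" using bs1 by (simp add: mult_le_cancel_right1)
  then show "norm hv \<le> e1" using bsh by simp
  show "norm gM \<le> 2 * e1"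
  proof (cases "gM = 0")
    case True
    have "0 \<le> e1" using ngw norm_ge_zero[of gw] by linarith
    then show ?thesis using True by simp
  next
    case False
    have e: "gM \<bullet> gw = gM \<bullet> gM - hv \<bullet> L gM"
      using gw[of gM] JgM by simp
    have "gM \<bullet> gw \<le> norm gM * e1"
      using Cauchy_Schwarz_ineq2[of gM gw] ngw abs_le_D1
      by (meson mult_left_mono norm_ge_zero order_trans)
    then have "norm gM * norm gM \<le> norm gM * e1 + norm hv * (?C * norm gM)"
      using e Lb[of gM] by (simp add: power2_norm_eq_inner[symmetric] power2_eq_square)
    then have "norm gM * norm gM \<le> norm gM * (e1 + ?C * norm hv)" by (simp add: algebra_simps)
    then have "norm gM \<le> e1 + ?C * norm hv" using False by simp
    then show ?thesis using key by simp
  qed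
qed

lemma second_order:
  fixes Qg HM E1 E2 e1 e2 \<beta> s \<sigma> nh nv CA CL Cc :: real
  assumes "Qg \<ge> - e2 * nv2"
    and "HM = Qg + E1 - 2 * \<beta> * E2"
    and "\<bar>E1\<bar> \<le> CL * nv2 * nh" and "\<bar>E2\<bar> \<le> CA * nv2 * nh"
    and "nh \<le> e1" "\<beta> * s * nh \<le> e1" "s \<ge> \<sigma>" "\<sigma> > 0" "\<beta> > 0" "nh \<ge> 0" "nv2 \<ge> 0"
    and "CA \<ge> 0" "CL \<ge> 0" "Cc \<ge> 2 * CA / \<sigma> + CL"
  shows "HM + (e2 + Cc * e1) * nv2 \<ge> 0"
proof -
  have e1: "e1 \<ge> 0" using assms by linarith
  have bnh: "\<beta> * nh \<le> e1 / \<sigma>"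
  proof -
    have "\<beta> * nh * \<sigma> \<le> \<beta> * nh * s" using assms by (intro mult_left_mono) auto
    also have "\<dots> \<le> e1" using assms by (simp add: algebra_simps)
    finally show ?thesis using assms by (simp add: field_simps)
  qed
  have t2: "2 * \<beta> * E2 \<le> 2 * CA * nv2 * (e1 / \<sigma>)"
  proof -
    have "2 * \<beta> * E2 \<le> 2 * \<beta> * (CA * nv2 * nh)" using assms abs_le_D1 by (intro mult_left_mono) auto
    also have "\<dots> = 2 * CA * nv2 * (\<beta> * nh)" by (simp add: algebra_simps)
    also have "\<dots> \<le> 2 * CA * nv2 * (e1 / \<sigma>)" using assms bnh by (intro mult_left_mono) auto
    finally show ?thesis .
  qed
  have t1: "- E1 \<le> CL * nv2 * e1"
  proof -
    have "- E1 \<le> CL * nv2 * nh" using assms by linarith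
    also have "\<dots> \<le> CL * nv2 * e1" using assms by (intro mult_left_mono) auto
    finally show ?thesis .
  qed
  have "(2 * CA / \<sigma> + CL) * e1 * nv2 \<le> Cc * e1 * nv2"
    using assms e1 by (intro mult_right_mono) auto
  moreover have "2 * CA * nv2 * (e1 / \<sigma>) + CL * nv2 * e1 = (2 * CA / \<sigma> + CL) * e1 * nv2"
    by (simp add: algebra_simps)
  ultimately show ?thesis using assms t1 t2 by (simp add: algebra_simps)
qed

theorem mainTheorem5:
  fixes f :: "'a::euclidean_space \<Rightarrow> real" and h :: "'a \<Rightarrow> real^'m"
    and R \<sigma> \<beta> \<epsilon>1 \<epsilon>2 :: real and x :: 'a
  assumes f_smooth: "smooth_real f"
    and h_smooth: "\<forall>i. smooth_real (\<lambda>y. h y $ i)"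
    and A1: "R > 0" "\<sigma> > 0" "\<forall>y. norm (h y) \<le> R \<longrightarrow> sigma_min (Dh h y) \<ge> \<sigma>"
    and A2: "compact {y. h y = 0}" "compact {y. norm (h y) \<le> R}"
    and beta: "\<beta> > max (SUP y\<in>{y. norm (h y) \<le> R}. beta2 f h y)
                        (SUP y\<in>{y. norm (h y) \<le> R}. beta3 h y)"
    and xC: "norm (h x) \<le> R"
    and gradg: "norm (grad (gfun f h \<beta>) x) \<le> \<epsilon>1"
    and hessg: "psd_shift_on UNIV (hess (gfun f h \<beta>) x) \<epsilon>2"
  shows "approx_socp f h \<epsilon>1 (2 * \<epsilon>1) (\<epsilon>2 + Cconst f h R \<sigma> * \<epsilon>1) x
     \<and> psd_shift_on {v. Dh h x v = 0} (hessM f h x) (\<epsilon>2 + Cconst f h R \<sigma> * \<epsilon>1)"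
proof -
  define hi where "hi = (\<lambda>i y. h y $ i)"
  have shi: "\<forall>i. smo UNIV (hi i)" using h_smooth smooth_real_smo unfolding hi_def by blast
  have sf: "smo UNIV f" using smooth_real_smo f_smooth by blast
  have DhT: "Dh h z = Tm hi z" for z
    unfolding Dh_def
    by (rule frechet_derivative_at[symmetric]) (use hvec_deriv[of UNIV h z] shi in \<open>simp add: hi_def\<close>)
  have linJ: "linear (Tm hi z)" for z by (rule Tm_linear[OF shi UNIV_I])
  define M where "M z = (\<chi> i j. \<Sum>b\<in>Basis. dd (hi i) b z * dd (hi j) b z)" for z
  define rhs where "rhs z = Tm hi z (grad f z)" for z
  have MJ: "M z *v u = Tm hi z (adjoint (Tm hi z) u)" for z u
    unfolding Tm_adjoint[OF shi UNIV_I] unfolding Tm_grad[OF shi UNIV_I]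
    by (simp add: vec_eq_iff M_def matrix_vector_mult_def
        inner_sum_left grad_inner sum_distrib_left mult.commute mult.left_commute)
  have rhs_i: "rhs z $ i = (\<Sum>b\<in>Basis. dd (hi i) b z * dd f b z)" for z i
    by (simp add: rhs_def Tm_grad[OF shi UNIV_I] grad_inner mult.commute)
  have sdd: "smo U (\<lambda>z. dd (hi i) b z)" for U i b
    using smo_UNIV[OF smo_dd[OF open_UNIV shi[rule_format]]] by blast
  have sddf: "smo U (\<lambda>z. dd f b z)" for U b
    using smo_UNIV[OF smo_dd[OF open_UNIV sf]] by blast
  have smoM: "smo U (\<lambda>z. M z $ i $ j)" for U i j
    unfolding M_def by (simp, intro smo_sum smo_mult sdd)
  have smorhs: "smo U (\<lambda>z. rhs z $ i)" for U i
    unfolding rhs_i by (intro smo_sum smo_mult sdd sddf)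
  define U0 where "U0 = {z. det (M z) \<noteq> 0}"
  have openU0: "open U0"
    unfolding U0_def
    by (rule open_Collect_neq[OF smo_cont[OF smo_det[OF smoM]] continuous_on_const])
  define lk where "lk k z = det (\<chi> i j. if j = k then rhs z $ i else M z $ i $ j) / det (M z)" for k z
  have slk: "\<forall>k. smo U0 (lk k)"
  proof
    fix k
    have e: "(\<lambda>z. (\<chi> i j. if j = k then rhs z $ i else M z $ i $ j) $ i $ j) =
             (if j = k then (\<lambda>z. rhs z $ i) else (\<lambda>z. M z $ i $ j))" for i j
      by (cases "j = k") simp_all
    have "smo U0 (\<lambda>z. (\<chi> i j. if j = k then rhs z $ i else M z $ i $ j) $ i $ j)" for i j
      unfolding e by (cases "j = k") (simp_all add: smorhs smoM)
    then show "smo U0 (lk k)"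
      unfolding lk_def by (intro smo_divide smo_det smoM) (auto simp: U0_def)
  qed
  have Mlk: "M z *v (\<chi> k. lk k z) = rhs z" if "z \<in> U0" for z
    using cramer[of "M z" "\<chi> k. lk k z" "rhs z"] that unfolding U0_def lk_def by simp
  have lamU: "lam f h z = (\<chi> k. lk k z)" if "z \<in> U0" for z
  proof -
    have d: "det (M z) \<noteq> 0" using that U0_def by simp
    have "M z *v lam f h z = rhs z"
      unfolding lam_def DhT rhs_def by (rule pinv_lemma[OF linJ MJ d])
    then show ?thesis using cramer[OF d] unfolding lk_def by simp
  qed
  have lkD: "((\<lambda>z. \<chi> k. lk k z) has_derivative Tm lk z) (at z)" if "z \<in> U0" for z
    using hvec_deriv[of U0 "\<lambda>z. \<chi> k. lk k z" z] slk that by simp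
  have lamD: "frechet_derivative (lam f h) (at z) = Tm lk z" if "z \<in> U0" for z
    by (rule frechet_derivative_at[symmetric],
        rule has_derivative_transform_within_open[OF lkD[OF that] openU0 that])
       (simp add: lamU)
  have CU0: "{y. norm (h y) \<le> R} \<subseteq> U0"
  proof
    fix y assume "y \<in> {y. norm (h y) \<le> R}"
    then have sy: "sigma_min (Tm hi y) \<ge> \<sigma>" using A1(3) DhT by auto
    have "u = 0" if "M y *v u = 0" for u
    proof -
      have "adjoint (Tm hi y) u \<bullet> adjoint (Tm hi y) u = u \<bullet> (M y *v u)"
        unfolding MJ by (simp add: adjoint_clauses[OF linJ] inner_commute)
      then have "norm (adjoint (Tm hi y) u) = 0" using that by simp
      then have "\<sigma> * norm u \<le> 0"
        using sig_bound[OF linJ, of y u] sy mult_right_mono[OF sy norm_ge_zero[of u]] by linarith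
      then show ?thesis using A1(2) by (simp add: mult_le_0_iff)
    qed
    then show "y \<in> U0" unfolding U0_def using det_nz_ker by blast
  qed
  have xU: "x \<in> U0" using CU0 xC by blast
  have sf0: "smo U0 f" by (rule smo_UNIV[OF sf])
  have shi0: "\<forall>i. smo U0 (hi i)" using smo_UNIV shi by blast
  define gs where "gs z = f z - (\<Sum>i\<in>UNIV. hi i z * lk i z) + \<beta> * (\<Sum>i\<in>UNIV. hi i z * hi i z)" for z
  have gU: "gfun f h \<beta> z = gs z" if "z \<in> U0" for z
    unfolding gfun_def gs_def lamU[OF that] power2_norm_eq_inner
    by (simp add: inner_vec_def hi_def)
  have sgs: "smo U0 gs"
    unfolding gs_def
    by (intro smo_add smo_diff smo_sum smo_mult smo_const sf0 shi0[rule_format] slk[rule_format])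
  define G1 where "G1 v z = dd f v z - (\<Sum>i\<in>UNIV. hi i z * dd (lk i) v z + dd (hi i) v z * lk i z)
      + \<beta> * (\<Sum>i\<in>UNIV. hi i z * dd (hi i) v z + dd (hi i) v z * hi i z)" for v z
  have gsD: "(gs has_derivative (\<lambda>v. G1 v z)) (at z)" if "z \<in> U0" for z
    unfolding gs_def G1_def
    by (intro has_derivative_add has_derivative_diff has_derivative_sum has_derivative_mult
        has_derivative_mult_right smo_hasderiv[OF sf0 that] smo_hasderiv[OF shi0[rule_format] that]
        smo_hasderiv[OF slk[rule_format] that])
  have ddgs: "dd gs v z = G1 v z" if "z \<in> U0" for v z
    using frechet_derivative_at[OF gsD[OF that]] by metis
  have gradEqz: "grad (gfun f h \<beta>) z = grad gs z" if "z \<in> U0" for z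
  proof -
    have "frechet_derivative (gfun f h \<beta>) (at z) = frechet_derivative gs (at z)"
      by (rule fd_cong[OF openU0 that]) (rule gU)
    then show ?thesis unfolding grad_def by simp
  qed
  let ?J = "Tm hi x"
  let ?lv = "lam f h x"
  let ?L = "Tm lk x"
  let ?gM = "gradM f h x"
  let ?gw = "grad (gfun f h \<beta>) x"
  let ?hv = "h x"
  have lv: "?lv = (\<chi> k. lk k x)" by (rule lamU[OF xU])
  have gMdef: "?gM = grad f x - adjoint ?J ?lv" unfolding gradM_def DhT ..
  have gw: "u \<bullet> ?gw = u \<bullet> ?gM - ?hv \<bullet> ?L u + 2 * \<beta> * (?J u \<bullet> ?hv)" for u
  proof -
    have "u \<bullet> ?gw = G1 u x"
      unfolding gradEqz[OF xU] dd_grad[OF sgs xU, symmetric] ddgs[OF xU] ..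
    also have "\<dots> = u \<bullet> ?gM - ?hv \<bullet> ?L u + 2 * \<beta> * (?J u \<bullet> ?hv)"
      unfolding gMdef G1_def inner_diff_right adjoint_clauses(1)[OF linJ] dd_grad[OF sf UNIV_I, symmetric]
      by (simp add: lv Tm_def inner_vec_def hi_def sum.distrib sum_distrib_left algebra_simps)
    finally show ?thesis .
  qed
  have JgM: "?J ?gM = 0"
    unfolding gMdef linear_diff[OF linJ] MJ[symmetric] lv Mlk[OF xU] rhs_def by simp
  have blL: "bounded_linear ?L" using Tm_linear[OF slk xU] linear_conv_bounded_linear by blast
  have Clam: "C_lam f h x = onorm ?L" unfolding C_lam_def lamD[OF xU] ..
  let ?s = "sigma_min ?J"
  have sx: "?s \<ge> \<sigma>" using A1(3) xC DhT by auto
  have s0: "?s > 0" using sx A1(2) by linarith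
  let ?C = "{y. norm (h y) \<le> R}"
  have b2bdd: "bdd_above (beta2 f h ` ?C)"
  proof -
    have cont: "continuous_on U0 (\<lambda>y. (\<Sum>i\<in>UNIV. norm (grad (lk i) y)) / \<sigma>)"
      using A1(2) by (intro continuous_intros grad_cont[OF openU0 slk[rule_format]]) auto
    obtain B where B: "\<forall>y\<in>?C. (\<Sum>i\<in>UNIV. norm (grad (lk i) y)) / \<sigma> \<le> B"
      using bounded_on_compact[OF A2(2) CU0 cont] by blast
    have "beta2 f h y \<le> B" if "y \<in> ?C" for y
    proof -
      have yU: "y \<in> U0" using that CU0 by blast
      have sy: "sigma_min (Dh h y) \<ge> \<sigma>" using A1(3) that by auto
      have o0: "0 \<le> onorm (Tm lk y)"
        using onorm_pos_le Tm_linear[OF slk yU] linear_conv_bounded_linear by blast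
      have "beta2 f h y = onorm (Tm lk y) / sigma_min (Dh h y)"
        unfolding beta2_def C_lam_def lamD[OF yU] ..
      also have "\<dots> \<le> onorm (Tm lk y) / \<sigma>"
        using sy A1(2) o0 by (intro divide_left_mono) auto
      also have "\<dots> \<le> (\<Sum>i\<in>UNIV. norm (grad (lk i) y)) / \<sigma>"
        using Tm_onorm[OF slk yU] A1(2) by (intro divide_right_mono) auto
      also have "\<dots> \<le> B" using B that by blast
      finally show ?thesis .
    qed
    then show ?thesis by (intro bdd_aboveI2) auto
  qed
  have b3bdd: "bdd_above (beta3 h ` ?C)"
  proof -
    have "beta3 h y \<le> 1 / \<sigma>" if "y \<in> ?C" for y
    proof -
      have sy: "sigma_min (Dh h y) \<ge> \<sigma>" using A1(3) that by auto
      then show ?thesis unfolding beta3_def using A1(2) by (intro divide_left_mono) auto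
    qed
    then show ?thesis by (intro bdd_aboveI2) auto
  qed
  have b2: "\<beta> > onorm ?L / ?s"
  proof -
    have "beta2 f h x \<le> (SUP y\<in>?C. beta2 f h y)" using xC b2bdd by (intro cSUP_upper) auto
    then show ?thesis using beta unfolding beta2_def Clam DhT by linarith
  qed
  have b3: "\<beta> > 1 / ?s"
  proof -
    have "beta3 h x \<le> (SUP y\<in>?C. beta3 h y)" using xC b3bdd by (intro cSUP_upper) auto
    then show ?thesis using beta unfolding beta3_def DhT by linarith
  qed
  have sig: "?s * norm y \<le> norm (adjoint ?J y)" for y by (rule sig_bound[OF linJ])
  note FO = first_order[OF linJ blL s0 sig JgM gw gradg b2 b3]
  have nh: "norm ?hv \<le> \<epsilon>1" and bsh: "\<beta> * ?s * norm ?hv \<le> \<epsilon>1" and ngM: "norm ?gM \<le> 2 * \<epsilon>1"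
    using FO by auto
  have b0: "\<beta> > 0" using b3 s0 by (meson divide_pos_pos less_trans zero_less_one)
  let ?FA = "\<lambda>y. frechet_derivative (\<lambda>z. Blinfun (adjoint (Dh h z))) (at y)"
  let ?FL = "\<lambda>y. frechet_derivative (\<lambda>z. Blinfun (adjoint (frechet_derivative (lam f h) (at z)))) (at y)"
  have FA: "?FA y = frechet_derivative (\<lambda>z. Blinfun (adjoint (Tm hi z))) (at y)" for y
    unfolding DhT ..
  have FL: "?FL y = frechet_derivative (\<lambda>z. Blinfun (adjoint (Tm lk z))) (at y)" if "y \<in> U0" for y
    by (rule fd_cong[OF openU0 that]) (simp add: lamD)
  have CcBdd: "bdd_above ((\<lambda>y. 2 * onorm (?FA y) / \<sigma> + onorm (?FL y)) ` ?C)"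
  proof -
    have cont: "continuous_on U0 (\<lambda>y. 2 * KF hi y / \<sigma> + KF lk y)"
      using A1(2) continuous_on_subset[OF KF_cont[OF open_UNIV shi]] KF_cont[OF openU0 slk]
      by (intro continuous_intros) auto
    obtain B where B: "\<forall>y\<in>?C. 2 * KF hi y / \<sigma> + KF lk y \<le> B"
      using bounded_on_compact[OF A2(2) CU0 cont] by blast
    have "2 * onorm (?FA y) / \<sigma> + onorm (?FL y) \<le> B" if "y \<in> ?C" for y
    proof -
      have yU: "y \<in> U0" using that CU0 by blast
      have "onorm (?FA y) \<le> KF hi y" unfolding FA by (rule Fb_onorm[OF open_UNIV shi UNIV_I])
      then have "2 * onorm (?FA y) / \<sigma> \<le> 2 * KF hi y / \<sigma>" using A1(2) by (simp add: divide_right_mono)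
      moreover have "onorm (?FL y) \<le> KF lk y" unfolding FL[OF yU] by (rule Fb_onorm[OF openU0 slk yU])
      ultimately show ?thesis using B that by fastforce
    qed
    then show ?thesis by (intro bdd_aboveI2) auto
  qed
  let ?Cc = "Cconst f h R \<sigma>"
  have Cc: "2 * onorm (?FA x) / \<sigma> + onorm (?FL x) \<le> ?Cc"
    unfolding Cconst_def using xC CcBdd by (intro cSUP_upper) auto
  have psd: "psd_shift_on {v. Dh h x v = 0} (hessM f h x) (\<epsilon>2 + ?Cc * \<epsilon>1)"
    unfolding psd_shift_on_def
  proof
    fix v assume "v \<in> {v. Dh h x v = 0}"
    then have Jv: "?J v = 0" using DhT by simp
    then have dhv: "dd (hi i) v x = 0" for i by (simp add: Tm_def vec_eq_iff)
    let ?Q = "\<lambda>\<phi>. dd (\<lambda>z. dd \<phi> v z) v x"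
    have hessEq: "hess (gfun f h \<beta>) x = hess gs x"
      unfolding hess_def by (rule fd_cong[OF openU0 xU]) (rule gradEqz)
    have "v \<bullet> hess gs x v = ?Q gs" by (rule hess_Q[OF openU0 sgs xU])
    also have "\<dots> = dd (G1 v) v x"
      by (rule arg_cong[where f="\<lambda>F. F v"], rule fd_cong[OF openU0 xU]) (rule ddgs)
    finally have Qg1: "v \<bullet> hess gs x v = dd (G1 v) v x" .
    have sddf0: "smo U0 (\<lambda>z. dd f v z)" by (rule sddf)
    have sddh0: "smo U0 (\<lambda>z. dd (hi i) v z)" for i by (rule sdd)
    have sddl0: "smo U0 (\<lambda>z. dd (lk i) v z)" for i by (rule smo_dd[OF openU0 slk[rule_format]])
    have G1D: "(G1 v has_derivative (\<lambda>w. dd (\<lambda>z. dd f v z) w x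
        - (\<Sum>i\<in>UNIV. (hi i x * dd (\<lambda>z. dd (lk i) v z) w x + dd (hi i) w x * dd (lk i) v x)
                    + (dd (hi i) v x * dd (lk i) w x + dd (\<lambda>z. dd (hi i) v z) w x * lk i x))
        + \<beta> * (\<Sum>i\<in>UNIV. (hi i x * dd (\<lambda>z. dd (hi i) v z) w x + dd (hi i) w x * dd (hi i) v x)
                    + (dd (hi i) v x * dd (hi i) w x + dd (\<lambda>z. dd (hi i) v z) w x * hi i x)))) (at x)"
      unfolding G1_def[abs_def]
      by (intro has_derivative_add has_derivative_diff has_derivative_sum has_derivative_mult
        has_derivative_mult_right smo_hasderiv[OF sddf0 xU] smo_hasderiv[OF sddh0 xU]
        smo_hasderiv[OF sddl0 xU] smo_hasderiv[OF shi0[rule_format] xU]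
        smo_hasderiv[OF slk[rule_format] xU])
    have QG: "dd (G1 v) v x = ?Q f - (\<Sum>i\<in>UNIV. hi i x * ?Q (lk i) + ?Q (hi i) * lk i x)
        + \<beta> * (\<Sum>i\<in>UNIV. hi i x * ?Q (hi i) + ?Q (hi i) * hi i x)"
      using fun_cong[OF frechet_derivative_at[OF G1D, symmetric], of v] by (simp add: dhv)
    have linD: "linear (Dh h x)" unfolding DhT by (rule linJ)
    have vS: "v \<in> {w. Dh h x w = 0}" using Jv DhT by simp
    have HM: "v \<bullet> hessM f h x v = ?Q f - (\<Sum>i\<in>UNIV. lk i x * ?Q (hi i))"
    proof -
      have Pv: "closest_point {w. Dh h x w = 0} v = v" by (rule closest_point_self[OF vS])
      have "v \<bullet> hessM f h x v = v \<bullet> (hess f x v - (\<Sum>i\<in>UNIV. ?lv $ i *\<^sub>R hess (\<lambda>y. h y $ i) x v))"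
        unfolding hessM_def o_def Proj_def Pv using proj_inner[OF linD] vS by simp
      also have "\<dots> = v \<bullet> hess f x v - (\<Sum>i\<in>UNIV. lk i x * (v \<bullet> hess (hi i) x v))"
        by (simp add: inner_diff_right inner_sum_right lv hi_def)
      also have "\<dots> = ?Q f - (\<Sum>i\<in>UNIV. lk i x * ?Q (hi i))"
        using hess_Q[OF open_UNIV sf UNIV_I, of v] hess_Q[OF open_UNIV shi[rule_format] UNIV_I, of v]
        by simp
      finally show ?thesis .
    qed
    let ?E1 = "\<Sum>i\<in>UNIV. ?hv $ i * ?Q (lk i)"
    let ?E2 = "\<Sum>i\<in>UNIV. ?hv $ i * ?Q (hi i)"
    have hg: "v \<bullet> hess gs x v \<ge> - \<epsilon>2 * (v \<bullet> v)"
    proof -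
      have "0 \<le> v \<bullet> hess gs x v + \<epsilon>2 * (v \<bullet> v)"
        using hessg hessEq unfolding psd_shift_on_def by simp
      then show ?thesis by linarith
    qed
    have eq: "v \<bullet> hessM f h x v = v \<bullet> hess gs x v + ?E1 - 2 * \<beta> * ?E2"
      unfolding HM Qg1 QG by (simp add: hi_def sum.distrib sum_distrib_left algebra_simps)
    have E1: "\<bar>?E1\<bar> \<le> onorm (?FL x) * (v \<bullet> v) * norm ?hv"
      using Fb_bound[OF openU0 slk xU, of ?hv v] unfolding FL[OF xU]
      by (simp add: power2_norm_eq_inner[symmetric] power2_eq_square algebra_simps)
    have E2: "\<bar>?E2\<bar> \<le> onorm (?FA x) * (v \<bullet> v) * norm ?hv"
      using Fb_bound[OF open_UNIV shi UNIV_I, of ?hv v] unfolding FA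
      by (simp add: power2_norm_eq_inner[symmetric] power2_eq_square algebra_simps)
    have CA0: "onorm (?FA x) \<ge> 0" unfolding FA by (rule onorm_pos_le[OF Fb_DF_bl[OF open_UNIV shi UNIV_I]])
    have CL0: "onorm (?FL x) \<ge> 0" unfolding FL[OF xU] by (rule onorm_pos_le[OF Fb_DF_bl[OF openU0 slk xU]])
    show "v \<bullet> hessM f h x v + (\<epsilon>2 + ?Cc * \<epsilon>1) * (v \<bullet> v) \<ge> 0"
      by (rule second_order[OF hg eq E1 E2 nh bsh sx A1(2) b0 norm_ge_zero inner_ge_zero CA0 CL0 Cc])
  qed
  have full: "x \<in> fullrank_set h"
  proof -
    have d: "det (M x) \<noteq> 0" using xU U0_def by simp
    have "range (Dh h x) = UNIV"
    proof (intro set_eqI iffI)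
      fix y :: "real^'m"
      obtain u where "M x *v u = y" using cramer[OF d, of _ y] by blast
      then have "y = Dh h x (adjoint ?J u)" using MJ DhT by simp
      then show "y \<in> range (Dh h x)" by blast
    qed auto
    then show ?thesis unfolding fullrank_set_def by simp
  qed
  show ?thesis unfolding approx_socp_def using full nh ngM psd by simp
qed

end
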